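(* There is an absolute constant $C$ such that for every $g:\{0,1\}^n\to\{0,1\}$ and all $0<\delta<\epsilon<1/2$, $$\log\mathsf{qprt}_\delta(g)\le\frac{C}{(1/2-\epsilon)^2}\log\frac1\delta\cdot\log\mathsf{qprt}_\epsilon(g).$$
   Context: For $s\in\{0,1,\star\}^n$ the subcube with support $s$ is $\{x\in\{0,1\}^n: s_i\ne\star\Rightarrow x_i=s_i\}$, and for such a subcube $A$, $|A|$ is the number of $i$ with $s_i\in\{0,1\}$. $\mathsf{qprt}_\epsilon(g)$ is the optimal value of the LP: minimize $\sum_{z\in\{0,1\}}\sum_A w_{z,A}2^{|A|}$ over subcubes $A$, subject to $\sum_{A\ni x}w_{g(x),A}\ge1-\epsilon$ for all $x$; $\sum_{A\ni x}\sum_z w_{z,A}=1$ for all $x$; $w_{z,A}\ge0$. Logs base 2. *)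

theory Defs
  imports Complex_Main
begin

text \<open>Points of the Boolean cube are bool lists of length n; a subcube is given by
its support, a list of length n over bool option (None = star).\<close>

definition cube :: "nat \<Rightarrow> bool list set" where
  "cube n = {x. length x = n}"

definition supports :: "nat \<Rightarrow> bool option list set" where
  "supports n = {s. length s = n}"

definition in_subcube :: "bool list \<Rightarrow> bool option list \<Rightarrow> bool" where
  "in_subcube x s \<longleftrightarrow> length x = length s \<and>
     (\<forall>i < length s. s ! i \<noteq> None \<longrightarrow> x ! i = the (s ! i))"

definition codim :: "bool option list \<Rightarrow> nat" where
  "codim s = card {i. i < length s \<and> s ! i \<noteq> None}"

definition qprt_feasible ::
  "nat \<Rightarrow> (bool list \<Rightarrow> bool) \<Rightarrow> real \<Rightarrow> (bool \<Rightarrow> bool option list \<Rightarrow> real) \<Rightarrow> bool" where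
  "qprt_feasible n g \<epsilon> w \<longleftrightarrow>
     (\<forall>z s. w z s \<ge> 0) \<and>
     (\<forall>x \<in> cube n. (\<Sum>s\<in>{s\<in>supports n. in_subcube x s}. w (g x) s) \<ge> 1 - \<epsilon>) \<and>
     (\<forall>x \<in> cube n. (\<Sum>s\<in>{s\<in>supports n. in_subcube x s}. \<Sum>z\<in>UNIV. w z s) = 1)"

definition qprt_cost :: "nat \<Rightarrow> (bool \<Rightarrow> bool option list \<Rightarrow> real) \<Rightarrow> real" where
  "qprt_cost n w = (\<Sum>z\<in>UNIV. \<Sum>s\<in>supports n. w z s * 2 ^ codim s)"

text \<open>Optimal value of the LP (the LP is feasible and bounded below by 0, so the
infimum is attained).\<close>
definition qprt :: "nat \<Rightarrow> real \<Rightarrow> (bool list \<Rightarrow> bool) \<Rightarrow> real" where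
  "qprt n \<epsilon> g = Inf {qprt_cost n w | w. qprt_feasible n g \<epsilon> w}"

end

theory Submission imports Defs begin

lemma finite_supports: "finite (supports n)"
proof -
  have "supports n = {xs. set xs \<subseteq> (UNIV::bool option set) \<and> length xs = n}"
    by (auto simp: supports_def)
  then show ?thesis using finite_lists_length_eq[of "UNIV::bool option set" n] by simp
qed

definition mrg :: "bool option list \<Rightarrow> bool option list \<Rightarrow> bool option list option" where
"mrg s1 s2 = (if length s1 = length s2 \<and> (\<forall>i<length s1. s1!i \<noteq> None \<longrightarrow> s2!i \<noteq> None \<longrightarrow> s1!i = s2!i)
   then Some (map2 (\<lambda>a b. if a = None then b else a) s1 s2) else None)"

lemma mrg_len: "mrg s1 s2 = Some s \<Longrightarrow> length s = length s1 \<and> length s2 = length s1"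
  by (auto simp: mrg_def split: if_splits)

lemma mrg_nth: "mrg s1 s2 = Some s \<Longrightarrow> i < length s \<Longrightarrow> s!i = (if s1!i = None then s2!i else s1!i)"
  by (auto simp: mrg_def split: if_splits)

lemma mrg_compat: "mrg s1 s2 = Some s \<Longrightarrow> i < length s1 \<Longrightarrow> s1!i \<noteq> None \<Longrightarrow> s2!i \<noteq> None \<Longrightarrow> s1!i = s2!i"
  by (auto simp: mrg_def split: if_splits)

lemma mrg_in: assumes "mrg s1 s2 = Some s"
  shows "in_subcube x s \<longleftrightarrow> in_subcube x s1 \<and> in_subcube x s2"
proof -
  note L = mrg_len[OF assms] and N = mrg_nth[OF assms] and C = mrg_compat[OF assms]
  show ?thesis
  proof
    assume H: "in_subcube x s"
    have "in_subcube x s1"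
      unfolding in_subcube_def
    proof (intro conjI allI impI)
      show "length x = length s1" using H L by (simp add: in_subcube_def)
      fix i assume i: "i < length s1" "s1 ! i \<noteq> None"
      then have "s!i = s1!i" using N L by auto
      then show "x ! i = the (s1 ! i)" using H i L by (auto simp: in_subcube_def)
    qed
    moreover have "in_subcube x s2"
      unfolding in_subcube_def
    proof (intro conjI allI impI)
      show "length x = length s2" using H L by (simp add: in_subcube_def)
      fix i assume i: "i < length s2" "s2 ! i \<noteq> None"
      then have "s!i \<noteq> None" using N L by auto
      moreover have "s!i = s2!i" using N L C i by (cases "s1!i = None") auto
      ultimately show "x ! i = the (s2 ! i)" using H i L by (auto simp: in_subcube_def)
    qed
    ultimately show "in_subcube x s1 \<and> in_subcube x s2" by blast
  next
    assume H: "in_subcube x s1 \<and> in_subcube x s2"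
    show "in_subcube x s"
      unfolding in_subcube_def
    proof (intro conjI allI impI)
      show "length x = length s" using H L by (simp add: in_subcube_def)
      fix i assume i: "i < length s" "s ! i \<noteq> None"
      show "x ! i = the (s ! i)"
      proof (cases "s1!i = None")
        case True then show ?thesis using N i H L by (auto simp: in_subcube_def)
      next
        case False then show ?thesis using N i H L by (auto simp: in_subcube_def)
      qed
    qed
  qed
qed

lemma mrg_ex: assumes "in_subcube x s1" "in_subcube x s2" shows "mrg s1 s2 \<noteq> None"
proof -
  have l: "length s1 = length s2" using assms by (simp add: in_subcube_def)
  have "\<forall>i<length s1. s1!i \<noteq> None \<longrightarrow> s2!i \<noteq> None \<longrightarrow> s1!i = s2!i"
  proof (intro allI impI)
    fix i assume i: "i < length s1" "s1!i \<noteq> None" "s2!i \<noteq> None"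
    have "x!i = the (s1!i)" "x!i = the (s2!i)" using assms i l by (auto simp: in_subcube_def)
    then show "s1!i = s2!i" using i by (cases "s1!i"; cases "s2!i") auto
  qed
  then show ?thesis using l by (simp add: mrg_def)
qed

lemma mrg_codim: assumes "mrg s1 s2 = Some s" shows "codim s \<le> codim s1 + codim s2"
proof -
  note L = mrg_len[OF assms] and N = mrg_nth[OF assms]
  have "{i. i < length s \<and> s!i \<noteq> None} \<subseteq> {i. i < length s1 \<and> s1!i \<noteq> None} \<union> {i. i < length s2 \<and> s2!i \<noteq> None}"
    using N L by auto
  then have "codim s \<le> card ({i. i < length s1 \<and> s1!i \<noteq> None} \<union> {i. i < length s2 \<and> s2!i \<noteq> None})"
    unfolding codim_def by (intro card_mono) auto
  also have "\<dots> \<le> codim s1 + codim s2" unfolding codim_def by (rule card_Un_le)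
  finally show ?thesis .
qed

lemma mrg_supp: "mrg s1 s2 = Some s \<Longrightarrow> s1 \<in> supports n \<Longrightarrow> s \<in> supports n"
  using mrg_len by (auto simp: supports_def)


definition Sx :: "nat \<Rightarrow> bool list \<Rightarrow> bool option list set" where
  "Sx n x = {s\<in>supports n. in_subcube x s}"

lemma finite_Sx: "finite (Sx n x)" using finite_supports by (simp add: Sx_def)

definition mprod :: "nat \<Rightarrow> (bool option list \<Rightarrow> real) \<Rightarrow> (bool option list \<Rightarrow> real) \<Rightarrow> bool option list \<Rightarrow> real" where
  "mprod n a b s = (\<Sum>s1\<in>supports n. \<Sum>s2\<in>supports n. a s1 * b s2 * of_bool (mrg s1 s2 = Some s))"

lemma swap3: "(\<Sum>a\<in>A. \<Sum>b\<in>B. \<Sum>c\<in>C. f a b c) = (\<Sum>b\<in>B. \<Sum>c\<in>C. \<Sum>a\<in>A. (f a b c :: real))"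
proof -
  have "(\<Sum>a\<in>A. \<Sum>b\<in>B. \<Sum>c\<in>C. f a b c) = (\<Sum>b\<in>B. \<Sum>a\<in>A. \<Sum>c\<in>C. f a b c)" by (rule sum.swap)
  also have "\<dots> = (\<Sum>b\<in>B. \<Sum>c\<in>C. \<Sum>a\<in>A. f a b c)" by (rule sum.cong[OF refl], rule sum.swap)
  finally show ?thesis .
qed

lemma mprod_nonneg: "(\<And>s. a s \<ge> 0) \<Longrightarrow> (\<And>s. b s \<ge> 0) \<Longrightarrow> mprod n a b s \<ge> 0"
  unfolding mprod_def by (intro sum_nonneg) auto

lemma mprod_zero: "mprod n (\<lambda>_. 0) b s = 0"
  unfolding mprod_def by simp

lemma mprod_sum1: "mprod n (\<lambda>s. \<Sum>c\<in>A. a c s) b s = (\<Sum>c\<in>A. mprod n (a c) b s)"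
  unfolding mprod_def sum_distrib_right by (rule swap3[where f="\<lambda>c s1 s2. a c s1 * b s2 * of_bool (mrg s1 s2 = Some s)", symmetric])

lemma mprod_add2: "mprod n a (\<lambda>s. b s + d s) s = mprod n a b s + mprod n a d s"
  unfolding mprod_def by (simp add: algebra_simps sum.distrib)

lemma sum_Sx: "(\<Sum>s\<in>Sx n x. f s) = (\<Sum>s\<in>supports n. f s * of_bool (in_subcube x s) :: real)"
  unfolding Sx_def sum.inter_filter[OF finite_supports] by (intro sum.cong) auto
lemma inner_Sx:
  assumes x: "x \<in> cube n" and s1: "s1 \<in> supports n" and s2: "s2 \<in> supports n"
  shows "(\<Sum>s\<in>Sx n x. of_bool (mrg s1 s2 = Some s) :: real) = of_bool (in_subcube x s1 \<and> in_subcube x s2)"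
proof (cases "mrg s1 s2")
  case None
  have "\<not> (in_subcube x s1 \<and> in_subcube x s2)" using None mrg_ex by blast
  then show ?thesis using None by simp
next
  case (Some r)
  have "(\<Sum>s\<in>Sx n x. of_bool (mrg s1 s2 = Some s) :: real) = (\<Sum>s\<in>Sx n x. if r = s then 1 else 0)"
    using Some by (intro sum.cong) auto
  also have "\<dots> = (if r \<in> Sx n x then 1 else 0)" using finite_Sx by simp
  also have "\<dots> = of_bool (in_subcube x s1 \<and> in_subcube x s2)"
    using mrg_in[OF Some] mrg_supp[OF Some s1] by (auto simp: Sx_def)
  finally show ?thesis .
qed

lemma mprod_Sx:
  assumes x: "x \<in> cube n"
  shows "(\<Sum>s\<in>Sx n x. mprod n a b s) = (\<Sum>s\<in>Sx n x. a s) * (\<Sum>s\<in>Sx n x. b s)"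
proof -
  have "(\<Sum>s\<in>Sx n x. mprod n a b s) = (\<Sum>s1\<in>supports n. \<Sum>s2\<in>supports n. \<Sum>s\<in>Sx n x. a s1 * b s2 * of_bool (mrg s1 s2 = Some s))"
    unfolding mprod_def by (rule swap3[where f="\<lambda>s s1 s2. a s1 * b s2 * of_bool (mrg s1 s2 = Some s)"])
  also have "\<dots> = (\<Sum>s1\<in>supports n. \<Sum>s2\<in>supports n. a s1 * b s2 * of_bool (in_subcube x s1 \<and> in_subcube x s2))"
    by (intro sum.cong refl) (simp add: sum_distrib_left[symmetric] inner_Sx[OF x])
  also have "\<dots> = (\<Sum>s1\<in>supports n. \<Sum>s2\<in>supports n. (a s1 * of_bool (in_subcube x s1)) * (b s2 * of_bool (in_subcube x s2)))"
    by (simp add: of_bool_conj mult_ac)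
  also have "\<dots> = (\<Sum>s1\<in>supports n. a s1 * of_bool (in_subcube x s1)) * (\<Sum>s2\<in>supports n. b s2 * of_bool (in_subcube x s2))"
    by (simp only: sum_product)
  also have "\<dots> = (\<Sum>s\<in>Sx n x. a s) * (\<Sum>s\<in>Sx n x. b s)"
    by (simp add: sum_Sx)
  finally show ?thesis .
qed

lemma mprod_cost:
  assumes a: "\<And>s. a s \<ge> 0" and b: "\<And>s. b s \<ge> 0"
  shows "(\<Sum>s\<in>supports n. mprod n a b s * 2 ^ codim s) \<le> (\<Sum>s\<in>supports n. a s * 2 ^ codim s) * (\<Sum>s\<in>supports n. b s * 2 ^ codim s)"
proof -
  have "(\<Sum>s\<in>supports n. mprod n a b s * 2 ^ codim s) = (\<Sum>s1\<in>supports n. \<Sum>s2\<in>supports n. \<Sum>s\<in>supports n. a s1 * b s2 * of_bool (mrg s1 s2 = Some s) * 2 ^ codim s)"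
    unfolding mprod_def sum_distrib_right by (rule swap3[where f="\<lambda>s s1 s2. a s1 * b s2 * of_bool (mrg s1 s2 = Some s) * 2 ^ codim s"])
  also have "\<dots> \<le> (\<Sum>s1\<in>supports n. \<Sum>s2\<in>supports n. (a s1 * 2 ^ codim s1) * (b s2 * 2 ^ codim s2))"
  proof (intro sum_mono)
    fix s1 s2 assume s1: "s1 \<in> supports n" and s2: "s2 \<in> supports n"
    show "(\<Sum>s\<in>supports n. a s1 * b s2 * of_bool (mrg s1 s2 = Some s) * 2 ^ codim s) \<le> (a s1 * 2 ^ codim s1) * (b s2 * 2 ^ codim s2)"
    proof (cases "mrg s1 s2")
      case None
      then show ?thesis using a b by simp
    next
      case (Some r)
      have "(\<Sum>s\<in>supports n. a s1 * b s2 * of_bool (mrg s1 s2 = Some s) * 2 ^ codim s) = (\<Sum>s\<in>supports n. if r = s then a s1 * b s2 * 2 ^ codim s else 0)"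
        using Some by (intro sum.cong) auto
      also have "\<dots> = a s1 * b s2 * 2 ^ codim r" using finite_supports mrg_supp[OF Some s1] by simp
      also have "\<dots> \<le> a s1 * b s2 * 2 ^ (codim s1 + codim s2)"
        using mrg_codim[OF Some] a b by (intro mult_left_mono power_increasing) auto
      also have "\<dots> = (a s1 * 2 ^ codim s1) * (b s2 * 2 ^ codim s2)" by (simp add: power_add)
      finally show ?thesis .
    qed
  qed
  also have "\<dots> = (\<Sum>s\<in>supports n. a s * 2 ^ codim s) * (\<Sum>s\<in>supports n. b s * 2 ^ codim s)"
    by (simp only: sum_product)
  finally show ?thesis .
qed



primrec W :: "nat \<Rightarrow> (bool \<Rightarrow> bool option list \<Rightarrow> real) \<Rightarrow> nat \<Rightarrow> nat \<Rightarrow> bool option list \<Rightarrow> real" where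
  "W n w 0 c s = (if c = 0 \<and> s = replicate n None then 1 else 0)"
| "W n w (Suc k) c s = mprod n (W n w k c) (w False) s + (case c of 0 \<Rightarrow> 0 | Suc c' \<Rightarrow> mprod n (W n w k c') (w True) s)"

lemma W_nonneg: assumes "\<And>z s. 0 \<le> w z s" shows "0 \<le> W n w k c s"
proof (induction k arbitrary: c s)
  case 0 then show ?case by simp
next
  case (Suc k)
  have "0 \<le> mprod n (W n w k c) (w False) s" using Suc assms by (intro mprod_nonneg) auto
  moreover have "0 \<le> (case c of 0 \<Rightarrow> 0 | Suc c' \<Rightarrow> mprod n (W n w k c') (w True) s)"
    using Suc assms by (cases c) (auto intro!: mprod_nonneg)
  ultimately show ?case by simp
qed

lemma W_big: "k < c \<Longrightarrow> W n w k c s = 0"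
proof (induction k arbitrary: c s)
  case 0 then show ?case by simp
next
  case (Suc k)
  then obtain c' where c: "c = Suc c'" "k < c'" by (cases c) auto
  have "W n w k c = (\<lambda>_. 0)" "W n w k c' = (\<lambda>_. 0)" using Suc.IH c Suc.prems by auto
  then show ?case using c by (simp add: mprod_zero)
qed

definition fW where "fW n w x k c = (\<Sum>s\<in>Sx n x. W n w k c s)"
definition PW where "PW n w x z = (\<Sum>s\<in>Sx n x. w z s)"

lemma fW_Suc: assumes "x \<in> cube n"
  shows "fW n w x (Suc k) c = fW n w x k c * PW n w x False + (case c of 0 \<Rightarrow> 0 | Suc c' \<Rightarrow> fW n w x k c' * PW n w x True)"
  by (cases c) (simp_all add: fW_def PW_def sum.distrib mprod_Sx[OF assms])

lemma repl_Sx: "x \<in> cube n \<Longrightarrow> replicate n None \<in> Sx n x"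
  by (auto simp: Sx_def supports_def cube_def in_subcube_def)

lemma moment: assumes x: "x \<in> cube n"
  shows "(\<Sum>c\<le>k. fW n w x k c * r ^ c) = (PW n w x False + r * PW n w x True) ^ k"
proof (induction k)
  case 0
  have "fW n w x 0 0 = (\<Sum>s\<in>Sx n x. if replicate n None = s then 1 else 0)"
    unfolding fW_def by (intro sum.cong) auto
  also have "\<dots> = 1" using repl_Sx[OF x] finite_Sx by simp
  finally show ?case by simp
next
  case (Suc k)
  let ?M = "\<Sum>c\<le>k. fW n w x k c * r ^ c"
  have "(\<Sum>c\<le>Suc k. fW n w x (Suc k) c * r ^ c) =
     (\<Sum>c\<le>Suc k. PW n w x False * (fW n w x k c * r ^ c)) + (\<Sum>c\<le>Suc k. (case c of 0 \<Rightarrow> 0 | Suc c' \<Rightarrow> fW n w x k c' * PW n w x True) * r ^ c)"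
    by (simp add: fW_Suc[OF x] sum.distrib algebra_simps)
  also have "(\<Sum>c\<le>Suc k. PW n w x False * (fW n w x k c * r ^ c)) = PW n w x False * ?M"
    by (simp add: sum_distrib_left[symmetric] fW_def W_big)
  also have "(\<Sum>c\<le>Suc k. (case c of 0 \<Rightarrow> 0 | Suc c' \<Rightarrow> fW n w x k c' * PW n w x True) * r ^ c) = r * PW n w x True * ?M"
    by (subst sum.atMost_Suc_shift) (simp add: sum_distrib_left algebra_simps)
  finally show ?case using Suc.IH by (simp add: algebra_simps)
qed

definition TW where "TW n w k s = (\<Sum>c\<le>k. W n w k c s)"

lemma TW_Suc: "TW n w (Suc k) s = mprod n (TW n w k) (\<lambda>s. w False s + w True s) s"
proof -
  have "TW n w (Suc k) s = (\<Sum>c\<le>Suc k. mprod n (W n w k c) (w False) s) + (\<Sum>c\<le>Suc k. (case c of 0 \<Rightarrow> 0 | Suc c' \<Rightarrow> mprod n (W n w k c') (w True) s))"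
    unfolding TW_def by (simp add: sum.distrib)
  also have "(\<Sum>c\<le>Suc k. mprod n (W n w k c) (w False) s) = (\<Sum>c\<le>k. mprod n (W n w k c) (w False) s)"
  proof -
    have "W n w k (Suc k) = (\<lambda>_. 0)" using W_big by auto
    then show ?thesis by (simp add: mprod_zero)
  qed
  also have "(\<Sum>c\<le>Suc k. (case c of 0 \<Rightarrow> 0 | Suc c' \<Rightarrow> mprod n (W n w k c') (w True) s)) = (\<Sum>c\<le>k. mprod n (W n w k c) (w True) s)"
    by (subst sum.atMost_Suc_shift) simp
  also have "(\<Sum>c\<le>k. mprod n (W n w k c) (w False) s) + (\<Sum>c\<le>k. mprod n (W n w k c) (w True) s) = mprod n (TW n w k) (\<lambda>s. w False s + w True s) s"
    unfolding TW_def mprod_add2 mprod_sum1 by simp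
  finally show ?thesis .
qed

lemma codim_repl: "codim (replicate n None) = 0"
  by (simp add: codim_def)

lemma TW_cost: assumes nn: "\<And>z s. 0 \<le> w z s"
  shows "(\<Sum>s\<in>supports n. TW n w k s * 2 ^ codim s) \<le> qprt_cost n w ^ k"
proof (induction k)
  case 0
  have "(\<Sum>s\<in>supports n. TW n w 0 s * 2 ^ codim s) = (\<Sum>s\<in>supports n. if replicate n None = s then 2 ^ codim s else 0)"
    unfolding TW_def by (intro sum.cong) auto
  also have "\<dots> = 1" using finite_supports by (simp add: supports_def codim_repl)
  finally show ?case by simp
next
  case (Suc k)
  have tn: "\<And>s. 0 \<le> TW n w k s" unfolding TW_def using W_nonneg[OF nn] by (simp add: sum_nonneg)
  have cn: "0 \<le> qprt_cost n w" unfolding qprt_cost_def using nn by (auto intro!: sum_nonneg)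
  have c0: "0 \<le> (\<Sum>s\<in>supports n. TW n w k s * 2 ^ codim s)" using tn by (auto intro!: sum_nonneg)
  have "(\<Sum>s\<in>supports n. TW n w (Suc k) s * 2 ^ codim s) \<le> (\<Sum>s\<in>supports n. TW n w k s * 2 ^ codim s) * (\<Sum>s\<in>supports n. (w False s + w True s) * 2 ^ codim s)"
    unfolding TW_Suc using tn nn by (intro mprod_cost) (auto intro: add_nonneg_nonneg)
  also have "(\<Sum>s\<in>supports n. (w False s + w True s) * 2 ^ codim s) = qprt_cost n w"
    unfolding qprt_cost_def by (simp add: UNIV_bool algebra_simps sum.distrib)
  also have "(\<Sum>s\<in>supports n. TW n w k s * 2 ^ codim s) * qprt_cost n w \<le> qprt_cost n w ^ k * qprt_cost n w"
    using Suc.IH cn by (intro mult_right_mono) auto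
  finally show ?case by (simp add: mult.commute)
qed


definition wamp :: "nat \<Rightarrow> (bool \<Rightarrow> bool option list \<Rightarrow> real) \<Rightarrow> nat \<Rightarrow> bool \<Rightarrow> bool option list \<Rightarrow> real" where
  "wamp n w k z s = (\<Sum>c\<le>k. of_bool ((k < 2*c) = z) * W n w k c s)"

lemma wamp_nonneg: "(\<And>z s. 0 \<le> w z s) \<Longrightarrow> 0 \<le> wamp n w k z s"
  unfolding wamp_def using W_nonneg by (intro sum_nonneg) auto

lemma wamp_sumz: "(\<Sum>z\<in>UNIV. wamp n w k z s) = TW n w k s"
proof -
  have "(\<Sum>z\<in>UNIV. wamp n w k z s) = wamp n w k False s + wamp n w k True s" by (simp add: UNIV_bool)
  also have "\<dots> = (\<Sum>c\<le>k. of_bool ((k < 2*c) = False) * W n w k c s + of_bool ((k < 2*c) = True) * W n w k c s)"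
    unfolding wamp_def by (simp only: sum.distrib)
  also have "\<dots> = TW n w k s" unfolding TW_def by (intro sum.cong) auto
  finally show ?thesis .
qed

lemma wamp_Sx: "(\<Sum>s\<in>Sx n x. wamp n w k z s) = (\<Sum>c\<le>k. of_bool ((k < 2*c) = z) * fW n w x k c)"
  unfolding wamp_def fW_def sum_distrib_left
  by (rule sum.swap[where g="\<lambda>s c. of_bool ((k < 2*c) = z) * W n w k c s"])

lemma fW_nonneg: "(\<And>z s. 0 \<le> w z s) \<Longrightarrow> 0 \<le> fW n w x k c"
  unfolding fW_def using W_nonneg by (intro sum_nonneg) auto

lemma alg1:
  fixes e q t :: real
  assumes e: "0 < e" "e < 1/2" and q: "0 \<le> q" "q \<le> e" and t: "t = (1-e)/e"
  shows "((1-q) + t*q)^2 / t \<le> 4*e*(1-e)"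
proof -
  have t1: "t - 1 = (1-2*e)/e" using t e by (simp add: field_simps)
  have tg: "t - 1 \<ge> 0" unfolding t1 using e by simp
  have tp: "t > 0" using t e by simp
  have "(1-q) + t*q = 1 + (t-1)*q" by (simp add: algebra_simps)
  also have "\<dots> \<le> 1 + (t-1)*e" using tg q by (simp add: mult_left_mono)
  also have "\<dots> = 2 - 2*e" unfolding t1 using e by (simp add: field_simps)
  finally have le: "(1-q) + t*q \<le> 2 - 2*e" .
  have ge: "0 \<le> (1-q) + t*q" using q e tp by (simp add: add_nonneg_nonneg)
  have "((1-q) + t*q)^2 \<le> (2 - 2*e)^2" using le ge by (intro power_mono) auto
  then have "((1-q) + t*q)^2 / t \<le> (2 - 2*e)^2 / t" using tp by (simp add: divide_right_mono)
  also have "\<dots> = 4*e*(1-e)" unfolding t using e by (simp add: field_simps power2_eq_square)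
  finally show ?thesis .
qed

lemma alg2:
  fixes e p t :: real
  assumes e: "0 < e" "e < 1/2" and p: "0 \<le> p" "p \<le> e" and t: "t = (1-e)/e"
  shows "(p + (1/t)*(1-p))^2 * t \<le> 4*e*(1-e)"
proof -
  have tp: "t > 0" using t e by simp
  have it: "1/t = e/(1-e)" using t e by simp
  have ne: "1 - e \<noteq> 0" using e by simp
  have "(p + (1/t)*(1-p)) * (1-e) = p*(1-2*e) + e" unfolding it using ne by (simp add: field_simps)
  also have "\<dots> \<le> e*(1-2*e) + e" using p e by (intro add_right_mono mult_right_mono) auto
  also have "\<dots> = (2*e) * (1-e)" by (simp add: algebra_simps)
  finally have le0: "(p + (1/t)*(1-p)) * (1-e) \<le> (2*e) * (1-e)" .
  have le: "p + (1/t)*(1-p) \<le> 2*e" using mult_right_le_imp_le[OF le0] e by simp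
  have ge: "0 \<le> p + (1/t)*(1-p)" using p e tp by simp
  have "(p + (1/t)*(1-p))^2 \<le> (2*e)^2" using le ge by (intro power_mono) auto
  then have "(p + (1/t)*(1-p))^2 * t \<le> (2*e)^2 * t" using tp by (simp add: mult_right_mono)
  also have "\<dots> = 4*e*(1-e)" unfolding t using e by (simp add: field_simps power2_eq_square)
  finally show ?thesis .
qed


lemma err_bound:
  assumes x: "x \<in> cube n" and nn: "\<And>z s. 0 \<le> w z s"
    and P1: "PW n w x False + PW n w x True = 1"
    and e: "0 < e" "e < 1/2" and Pb: "PW n w x (\<not> b) \<le> e"
  shows "(\<Sum>s\<in>Sx n x. wamp n w (2*m) (\<not> b) s) \<le> (4*e*(1-e))^m"
proof -
  define t where "t = (1-e)/e"
  have tp: "t > 0" using e by (simp add: t_def)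
  have t1: "t \<ge> 1" using e by (simp add: t_def field_simps)
  define f where "f c = fW n w x (2*m) c" for c
  have fn: "\<And>c. 0 \<le> f c" unfolding f_def by (rule fW_nonneg) (rule nn)
  have PFn: "0 \<le> PW n w x False" and PTn: "0 \<le> PW n w x True"
    unfolding PW_def using nn by (auto intro!: sum_nonneg)
  show ?thesis
  proof (cases b)
    case False
    have PT: "PW n w x True \<le> e" using Pb False by simp
    have PF: "PW n w x False = 1 - PW n w x True" using P1 by simp
    have "(\<Sum>s\<in>Sx n x. wamp n w (2*m) (\<not> b) s) = (\<Sum>c\<le>2*m. of_bool ((2*m < 2*c) = True) * f c)"
      using False by (simp add: wamp_Sx f_def)
    also have "\<dots> \<le> (\<Sum>c\<le>2*m. f c * (t^c / t^m))"
    proof (intro sum_mono)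
      fix c assume "c \<in> {..2*m}"
      show "of_bool ((2*m < 2*c) = True) * f c \<le> f c * (t^c / t^m)"
      proof (cases "2*m < 2*c")
        case True
        then have "t^m \<le> t^c" using t1 by (intro power_increasing) auto
        then have "1 \<le> t^c / t^m" using tp by simp
        then have "f c * 1 \<le> f c * (t^c / t^m)" using fn by (intro mult_left_mono) auto
        then show ?thesis using True by simp
      next
        case False
        then show ?thesis using fn tp by simp
      qed
    qed
    also have "\<dots> = (\<Sum>c\<le>2*m. f c * t^c) / t^m" by (simp add: sum_divide_distrib)
    also have "\<dots> = (PW n w x False + t * PW n w x True) ^ (2*m) / t^m"
      unfolding f_def moment[OF x] ..
    also have "\<dots> = (((1 - PW n w x True) + t * PW n w x True)^2 / t) ^ m"
      unfolding PF by (simp add: power_mult power_divide)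
    also have "\<dots> \<le> (4*e*(1-e))^m"
      using alg1[OF e PTn PT t_def] tp by (intro power_mono) auto
    finally show ?thesis .
  next
    case True
    have PF: "PW n w x False \<le> e" using Pb True by simp
    have PT: "PW n w x True = 1 - PW n w x False" using P1 by simp
    have "(\<Sum>s\<in>Sx n x. wamp n w (2*m) (\<not> b) s) = (\<Sum>c\<le>2*m. of_bool ((2*m < 2*c) = False) * f c)"
      using True by (simp add: wamp_Sx f_def)
    also have "\<dots> \<le> (\<Sum>c\<le>2*m. f c * ((1/t)^c * t^m))"
    proof (intro sum_mono)
      fix c assume "c \<in> {..2*m}"
      show "of_bool ((2*m < 2*c) = False) * f c \<le> f c * ((1/t)^c * t^m)"
      proof (cases "2*m < 2*c")
        case False
        then have "t^c \<le> t^m" using t1 by (intro power_increasing) auto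
        then have "1 \<le> (1/t)^c * t^m" using tp by (simp add: power_one_over)
        then have "f c * 1 \<le> f c * ((1/t)^c * t^m)" using fn by (intro mult_left_mono) auto
        then show ?thesis using False by simp
      next
        case True
        then show ?thesis using fn tp by simp
      qed
    qed
    also have "\<dots> = (\<Sum>c\<le>2*m. f c * (1/t)^c) * t^m" by (simp add: sum_distrib_right mult.assoc)
    also have "\<dots> = (PW n w x False + (1/t) * PW n w x True) ^ (2*m) * t^m"
      unfolding f_def moment[OF x] ..
    also have "\<dots> = ((PW n w x False + (1/t) * (1 - PW n w x False))^2 * t) ^ m"
      unfolding PT by (simp add: power_mult power_mult_distrib)
    also have "\<dots> \<le> (4*e*(1-e))^m"
      using alg2[OF e PFn PF t_def] tp by (intro power_mono) auto
    finally show ?thesis .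
  qed
qed


lemma sum_bool_split: "(\<Sum>z\<in>UNIV. h z) = h b + h (\<not> b)" for h :: "bool \<Rightarrow> real"
  by (cases b) (simp_all add: UNIV_bool)

lemma sum_Sx_TW: "(\<Sum>s\<in>Sx n x. TW n w k s) = (\<Sum>c\<le>k. fW n w x k c)"
  unfolding TW_def fW_def by (rule sum.swap[where g="\<lambda>s c. W n w k c s"])

lemma feas_P1:
  assumes "qprt_feasible n g e w" "x \<in> cube n"
  shows "PW n w x False + PW n w x True = 1"
proof -
  have "(\<Sum>s\<in>Sx n x. \<Sum>z\<in>UNIV. w z s) = 1" using assms unfolding qprt_feasible_def Sx_def by blast
  then show ?thesis unfolding PW_def by (simp add: UNIV_bool sum.distrib)
qed

lemma wamp_feasible:
  assumes feas: "qprt_feasible n g e w" and e: "0 < e" "e < 1/2" and d: "(4*e*(1-e))^m \<le> d"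
  shows "qprt_feasible n g d (wamp n w (2*m))"
proof -
  have nn: "\<And>z s. 0 \<le> w z s" using feas unfolding qprt_feasible_def by blast
  have c1: "\<And>x. x \<in> cube n \<Longrightarrow> 1 - e \<le> PW n w x (g x)"
    using feas unfolding qprt_feasible_def PW_def Sx_def by blast
  have tot: "(\<Sum>s\<in>Sx n x. \<Sum>z\<in>UNIV. wamp n w (2*m) z s) = 1" if x: "x \<in> cube n" for x
  proof -
    have "(\<Sum>s\<in>Sx n x. \<Sum>z\<in>UNIV. wamp n w (2*m) z s) = (\<Sum>c\<le>2*m. fW n w x (2*m) c * 1^c)"
      by (simp add: wamp_sumz sum_Sx_TW)
    also have "\<dots> = 1" unfolding moment[OF x] using feas_P1[OF feas x] by simp
    finally show ?thesis .
  qed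
  have cor: "1 - d \<le> (\<Sum>s\<in>Sx n x. wamp n w (2*m) (g x) s)" if x: "x \<in> cube n" for x
  proof -
    have P1: "PW n w x False + PW n w x True = 1" by (rule feas_P1[OF feas x])
    have "PW n w x (\<not> g x) \<le> e" using c1[OF x] P1 by (cases "g x") auto
    then have err: "(\<Sum>s\<in>Sx n x. wamp n w (2*m) (\<not> g x) s) \<le> d"
      using err_bound[OF x nn P1 e] d by (meson order_trans)
    have "1 = (\<Sum>s\<in>Sx n x. wamp n w (2*m) (g x) s + wamp n w (2*m) (\<not> g x) s)"
      using tot[OF x] by (simp add: sum_bool_split[of _ "g x"])
    also have "\<dots> = (\<Sum>s\<in>Sx n x. wamp n w (2*m) (g x) s) + (\<Sum>s\<in>Sx n x. wamp n w (2*m) (\<not> g x) s)"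
      by (simp add: sum.distrib)
    finally show ?thesis using err by linarith
  qed
  have wn: "\<And>z s. 0 \<le> wamp n w (2*m) z s" by (rule wamp_nonneg) (rule nn)
  show ?thesis
    unfolding qprt_feasible_def Sx_def[symmetric]
    using wn tot cor by blast
qed

lemma wamp_cost: "qprt_cost n (wamp n w k) = (\<Sum>s\<in>supports n. TW n w k s * 2 ^ codim s)"
proof -
  have "\<And>s. TW n w k s = wamp n w k False s + wamp n w k True s"
    using wamp_sumz[of n w k] by (simp add: UNIV_bool)
  then show ?thesis unfolding qprt_cost_def by (simp add: UNIV_bool sum.distrib[symmetric] distrib_right)
qed

lemma cost_ge1:
  assumes "qprt_feasible n g e w" shows "1 \<le> qprt_cost n w"
proof -
  define x where "x = replicate n False"
  have x: "x \<in> cube n" by (simp add: x_def cube_def)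
  have nn: "\<And>z s. 0 \<le> w z s" using assms unfolding qprt_feasible_def by blast
  have "1 = (\<Sum>s\<in>Sx n x. w False s + w True s)"
    using assms x unfolding qprt_feasible_def Sx_def by (simp add: UNIV_bool)
  also have "\<dots> \<le> (\<Sum>s\<in>supports n. w False s + w True s)"
    using nn by (intro sum_mono2 finite_supports) (auto simp: Sx_def intro: add_nonneg_nonneg)
  also have "\<dots> \<le> (\<Sum>s\<in>supports n. (w False s + w True s) * 2 ^ codim s)"
  proof (intro sum_mono)
    fix s
    have "(w False s + w True s) * 1 \<le> (w False s + w True s) * 2 ^ codim s"
      using nn by (intro mult_left_mono) (auto intro: add_nonneg_nonneg)
    then show "w False s + w True s \<le> (w False s + w True s) * 2 ^ codim s" by simp
  qed
  also have "\<dots> = qprt_cost n w"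
    unfolding qprt_cost_def by (simp add: UNIV_bool sum.distrib[symmetric] distrib_right)
  finally show ?thesis .
qed

definition pt :: "nat \<Rightarrow> (bool list \<Rightarrow> bool) \<Rightarrow> bool \<Rightarrow> bool option list \<Rightarrow> real" where
  "pt n g z s = of_bool (\<exists>y\<in>cube n. s = map Some y \<and> z = g y)"

lemma pt_Sx: assumes x: "x \<in> cube n" shows "(\<Sum>s\<in>Sx n x. pt n g z s) = of_bool (z = g x)"
proof -
  have "(\<Sum>s\<in>Sx n x. pt n g z s) = (\<Sum>s\<in>Sx n x. if map Some x = s then of_bool (z = g x) else 0)"
  proof (intro sum.cong refl)
    fix s assume s: "s \<in> Sx n x"
    show "pt n g z s = (if map Some x = s then of_bool (z = g x) else 0)"
    proof (cases "\<exists>y\<in>cube n. s = map Some y")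
      case True
      then obtain y where y: "y \<in> cube n" "s = map Some y" by blast
      have "y = x"
      proof (rule nth_equalityI)
        show "length y = length x" using x y by (simp add: cube_def)
        fix i assume "i < length y"
        then show "y ! i = x ! i" using s y by (auto simp: Sx_def in_subcube_def)
      qed
      then show ?thesis using y by (auto simp: pt_def)
    next
      case False
      then show ?thesis using x by (auto simp: pt_def)
    qed
  qed
  also have "\<dots> = (if map Some x \<in> Sx n x then of_bool (z = g x) else 0)"
    using finite_Sx by simp
  also have "\<dots> = of_bool (z = g x)"
    using x by (auto simp: Sx_def supports_def cube_def in_subcube_def)
  finally show ?thesis .
qed

lemma pt_feasible: assumes "0 \<le> e" shows "qprt_feasible n g e (pt n g)"
  unfolding qprt_feasible_def Sx_def[symmetric]
proof (intro conjI ballI allI)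
  fix z s show "0 \<le> pt n g z s" by (simp add: pt_def)
next
  fix x assume x: "x \<in> cube n"
  show "1 - e \<le> sum (pt n g (g x)) (Sx n x)" using pt_Sx[OF x] assms by simp
next
  fix x assume x: "x \<in> cube n"
  have "(\<Sum>s\<in>Sx n x. \<Sum>z\<in>UNIV. pt n g z s) = (\<Sum>s\<in>Sx n x. pt n g False s) + (\<Sum>s\<in>Sx n x. pt n g True s)"
    by (simp add: UNIV_bool sum.distrib)
  also have "\<dots> = 1" unfolding pt_Sx[OF x] by (cases "g x") auto
  finally show "(\<Sum>s\<in>Sx n x. \<Sum>z\<in>UNIV. pt n g z s) = 1" .
qed


lemma qprt_ge1: assumes "0 \<le> e" shows "1 \<le> qprt n e g"
  unfolding qprt_def
proof (rule cInf_greatest)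
  show "{qprt_cost n w |w. qprt_feasible n g e w} \<noteq> {}" using pt_feasible[OF assms] by blast
next
  fix c assume "c \<in> {qprt_cost n w |w. qprt_feasible n g e w}"
  then show "1 \<le> c" using cost_ge1 by blast
qed

lemma qprt_le: assumes "qprt_feasible n g e w" shows "qprt n e g \<le> qprt_cost n w"
  unfolding qprt_def
proof (rule cInf_lower)
  show "qprt_cost n w \<in> {qprt_cost n w |w. qprt_feasible n g e w}" using assms by blast
  show "bdd_below {qprt_cost n w |w. qprt_feasible n g e w}"
    by (rule bdd_belowI[where m=1]) (use cost_ge1 in blast)
qed

lemma amplify:
  assumes e: "0 < e" "e < 1/2" and d: "(4*e*(1-e))^m \<le> d" and m: "1 \<le> m" and d0: "0 \<le> d"
  shows "qprt n d g \<le> qprt n e g ^ (2*m)"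
proof -
  have k: "0 < 2*m" using m by simp
  have qd: "0 \<le> qprt n d g" using qprt_ge1[OF d0, of n g] by simp
  have key: "root (2*m) (qprt n d g) \<le> qprt_cost n w" if w: "qprt_feasible n g e w" for w
  proof -
    have nn: "\<And>z s. 0 \<le> w z s" using w unfolding qprt_feasible_def by blast
    have cw: "0 \<le> qprt_cost n w" using cost_ge1[OF w] by simp
    have "qprt n d g \<le> qprt_cost n (wamp n w (2*m))"
      by (rule qprt_le[OF wamp_feasible[OF w e d]])
    also have "\<dots> \<le> qprt_cost n w ^ (2*m)" unfolding wamp_cost by (rule TW_cost) (rule nn)
    finally have "root (2*m) (qprt n d g) \<le> root (2*m) (qprt_cost n w ^ (2*m))"
      using k by (rule real_root_le_mono[rotated])
    also have "\<dots> = qprt_cost n w" using k cw by (rule real_root_power_cancel)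
    finally show ?thesis .
  qed
  have "root (2*m) (qprt n d g) \<le> qprt n e g"
    unfolding qprt_def[of n e g]
  proof (rule cInf_greatest)
    show "{qprt_cost n w |w. qprt_feasible n g e w} \<noteq> {}" using pt_feasible[of e n g] e by auto
  next
    fix c assume "c \<in> {qprt_cost n w |w. qprt_feasible n g e w}"
    then show "root (2*m) (qprt n d g) \<le> c" using key by blast
  qed
  then have "root (2*m) (qprt n d g) ^ (2*m) \<le> qprt n e g ^ (2*m)"
    using qd by (intro power_mono real_root_ge_zero) auto
  then show ?thesis using k qd by simp
qed


theorem mainTheorem8:
  shows "\<exists>C::real. \<forall>(n::nat) (g::bool list \<Rightarrow> bool) (\<delta>::real) (\<epsilon>::real).
    0 < \<delta> \<longrightarrow> \<delta> < \<epsilon> \<longrightarrow> \<epsilon> < 1/2 \<longrightarrow>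
    log 2 (qprt n \<delta> g) \<le> C / (1/2 - \<epsilon>)^2 * log 2 (1/\<delta>) * log 2 (qprt n \<epsilon> g)"
proof (intro exI[of _ 1] allI impI)
  fix n :: nat and g :: "bool list \<Rightarrow> bool" and d e :: real
  assume d0: "0 < d" and de: "d < e" and e2: "e < 1/2"
  define c where "c = 1/2 - e"
  have c0: "0 < c" and c2: "c < 1/2" using de d0 e2 by (auto simp: c_def)
  define L where "L = log 2 (1/d)"
  have L1: "1 \<le> L"
  proof -
    have "log 2 2 \<le> log 2 (1/d)" using d0 de e2 by (intro log_mono) (auto simp: field_simps)
    then show ?thesis by (simp add: L_def)
  qed
  have lnd: "ln (1/d) = L * ln 2" unfolding L_def log_def by simp
  have ln2: "ln 2 \<le> (1::real)" using ln_le_minus_one[of 2] by simp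
  have ln2p: "0 < ln (2::real)" by simp
  have lnpos: "0 < ln (1/d)" unfolding lnd using L1 ln2p by simp
  define y where "y = ln (1/d) / (4*c^2)"
  have yp: "0 < y" unfolding y_def using lnpos c0 by simp
  define m where "m = nat \<lceil>y\<rceil>"
  have my: "y \<le> real m" unfolding m_def by (rule real_nat_ceiling_ge)
  have m1: "real m \<le> y + 1"
  proof -
    have "0 \<le> \<lceil>y\<rceil>" using yp by simp
    then have "real m = of_int \<lceil>y\<rceil>" unfolding m_def by simp
    then show ?thesis using ceiling_correct[of y] by linarith
  qed
  have mpos: "1 \<le> m" using my yp by linarith
  have a_eq: "4*e*(1-e) = 1 - 4*c^2" unfolding c_def by (simp add: algebra_simps power2_eq_square)
  have a0: "0 \<le> 1 - 4*c^2"
  proof -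
    have "c^2 \<le> (1/2)^2" using c0 c2 by (intro power_mono) auto
    then have "c^2 \<le> 1/4" by (simp add: power_divide)
    then show ?thesis by linarith
  qed
  have ad: "(4*e*(1-e))^m \<le> d"
  proof -
    have "(4*e*(1-e))^m = (1 - 4*c^2)^m" by (simp add: a_eq)
    also have "\<dots> \<le> exp (- (4*c^2)) ^ m"
      using a0 exp_ge_add_one_self[of "- (4*c^2)"] by (intro power_mono) auto
    also have "\<dots> = exp (real m * (- (4*c^2)))" by (rule exp_of_nat_mult[symmetric])
    also have "\<dots> \<le> exp (ln d)"
    proof -
      have "ln (1/d) = y * (4*c^2)" unfolding y_def using c0 by simp
      also have "\<dots> \<le> real m * (4*c^2)" using my c0 by (intro mult_right_mono) auto
      finally have "ln (1/d) \<le> real m * (4*c^2)" .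
      moreover have "ln (1/d) = - ln d" using d0 by (simp add: ln_div)
      ultimately show ?thesis by simp
    qed
    also have "\<dots> = d" using d0 by simp
    finally show ?thesis .
  qed
  have e0: "0 < e" using d0 de by simp
  have amp: "qprt n d g \<le> qprt n e g ^ (2*m)"
    using amplify[OF e0 e2 ad mpos] d0 by simp
  have qe1: "1 \<le> qprt n e g" using qprt_ge1 e0 by simp
  have qd1: "1 \<le> qprt n d g" using qprt_ge1 d0 by simp
  have "log 2 (qprt n d g) \<le> log 2 (qprt n e g ^ (2*m))"
    using amp qd1 by (intro log_mono) auto
  also have "\<dots> = real (2*m) * log 2 (qprt n e g)" using qe1 by (simp add: log_nat_power)
  finally have s1: "log 2 (qprt n d g) \<le> real (2*m) * log 2 (qprt n e g)" .
  have lq: "0 \<le> log 2 (qprt n e g)" using qe1 by simp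
  have km: "real (2*m) \<le> L / c^2"
  proof -
    have cc: "0 < c^2" using c0 by simp
    have h1: "real (2*m) \<le> 2*y + 2" using m1 by simp
    have h2: "2*y = ln (1/d) / (2*c^2)" unfolding y_def by (simp add: field_simps)
    have h3: "ln (1/d) / (2*c^2) \<le> L / (2*c^2)"
      unfolding lnd using L1 ln2 cc by (intro divide_right_mono) (auto simp: mult_le_cancel_left1)
    have h4: "(2::real) \<le> L / (2*c^2)"
    proof -
      have "c^2 \<le> (1/2)^2" using c0 c2 by (intro power_mono) auto
      then have "c^2 \<le> 1/4" by (simp add: power_divide)
      then have "4 * c^2 \<le> 1" by linarith
      also have "\<dots> \<le> L" by (rule L1)
      finally show ?thesis using cc by (simp add: field_simps)
    qed
    have h5: "L / (2*c^2) + L / (2*c^2) = L / c^2" by (simp add: field_simps)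
    from h1 h2 h3 h4 h5 show ?thesis by linarith
  qed
  have "real (2*m) * log 2 (qprt n e g) \<le> (L / c^2) * log 2 (qprt n e g)"
    using km lq by (rule mult_right_mono)
  also have "\<dots> = 1 / (1/2 - e)^2 * log 2 (1/d) * log 2 (qprt n e g)"
    unfolding L_def c_def by simp
  finally show "log 2 (qprt n d g) \<le> 1 / (1/2 - e)^2 * log 2 (1/d) * log 2 (qprt n e g)"
    using s1 by linarith
qed

end
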